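(* Let $G$ act by isometries on a $\delta$-hyperbolic geodesic space $X$, let $\alpha\ge3\delta$ and let $U\subset G$ be $\alpha$-reduced at $p\in X$. Then for every $w\in\mathbf F(U)$, $$2\alpha|w|_U\le|wp-p|\le L(U,p)\,|w|_U.$$ In particular the natural homomorphism $\mathbf F(U)\to G$ is injective.
   Context: Hyperbolicity: $(x,z)_t\ge\min\{(x,y)_t,(y,z)_t\}-\delta$ with $(x,y)_z=\frac12(|x-z|+|y-z|-|x-y|)$. $U\subset G$ finite is $\alpha$-reduced at $p$ if $U\cap U^{-1}=\varnothing$ and for distinct $u_1,u_2\in U\sqcup U^{-1}$, $(u_1p,u_2p)_p<\frac12\min\{|u_1p-p|,|u_2p-p|\}-\alpha-50\delta$. $\mathbf F(U)$ is the free group on $U$, $|w|_U$ its word length, and $wp$ means the image of $w$ in $G$ applied to $p$. $L(U,p)=\max_{u\in U}|up-p|$. *)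

theory Defs
  imports "HOL-Analysis.Analysis" "HOL-Algebra.Group"
begin

definition gromov :: "'x::metric_space \<Rightarrow> 'x \<Rightarrow> 'x \<Rightarrow> real" where
  "gromov x y z = (dist x z + dist y z - dist x y) / 2"

definition hyperbolic :: "real \<Rightarrow> 'x::metric_space itself \<Rightarrow> bool" where
  "hyperbolic \<delta> _ \<longleftrightarrow>
     (\<forall>x y z t :: 'x. gromov x z t \<ge> min (gromov x y t) (gromov y z t) - \<delta>)"

definition geodesic_space :: "'x::metric_space itself \<Rightarrow> bool" where
  "geodesic_space _ \<longleftrightarrow>
     (\<forall>x y :: 'x. \<exists>\<gamma> :: real \<Rightarrow> 'x. \<gamma> 0 = x \<and> \<gamma> (dist x y) = y \<and>
        (\<forall>s\<in>{0..dist x y}. \<forall>t\<in>{0..dist x y}. dist (\<gamma> s) (\<gamma> t) = \<bar>s - t\<bar>))"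

definition isometric_action ::
  "('g, 'b) monoid_scheme \<Rightarrow> ('g \<Rightarrow> 'x::metric_space \<Rightarrow> 'x) \<Rightarrow> bool" where
  "isometric_action G act \<longleftrightarrow> group G \<and>
     (\<forall>x. act \<one>\<^bsub>G\<^esub> x = x) \<and>
     (\<forall>g\<in>carrier G. \<forall>h\<in>carrier G. \<forall>x. act (g \<otimes>\<^bsub>G\<^esub> h) x = act g (act h x)) \<and>
     (\<forall>g\<in>carrier G. \<forall>x y. dist (act g x) (act g y) = dist x y)"

definition alpha_reduced ::
  "('g, 'b) monoid_scheme \<Rightarrow> ('g \<Rightarrow> 'x::metric_space \<Rightarrow> 'x) \<Rightarrow> real \<Rightarrow> real
     \<Rightarrow> 'g set \<Rightarrow> 'x \<Rightarrow> bool" where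
  "alpha_reduced G act \<delta> \<alpha> U p \<longleftrightarrow>
     finite U \<and> U \<subseteq> carrier G \<and> U \<inter> (\<lambda>u. inv\<^bsub>G\<^esub> u) ` U = {} \<and>
     (\<forall>u1\<in>U \<union> (\<lambda>u. inv\<^bsub>G\<^esub> u) ` U. \<forall>u2\<in>U \<union> (\<lambda>u. inv\<^bsub>G\<^esub> u) ` U. u1 \<noteq> u2 \<longrightarrow>
        gromov (act u1 p) (act u2 p) p
          < min (dist (act u1 p) p) (dist (act u2 p) p) / 2 - \<alpha> - 50 * \<delta>)"

text \<open>Elements of the free group F(U) are represented by reduced words over the
  formal letters u^{+1} = (u, True) and u^{-1} = (u, False), u in U.
  The word length |w|_U is the length of the reduced word.\<close>
definition reduced_word :: "'g set \<Rightarrow> ('g \<times> bool) list \<Rightarrow> bool" where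
  "reduced_word U w \<longleftrightarrow> fst ` set w \<subseteq> U \<and>
     (\<forall>i. Suc i < length w \<longrightarrow>
        \<not> (fst (w ! i) = fst (w ! Suc i) \<and> snd (w ! i) \<noteq> snd (w ! Suc i)))"

definition letter_val :: "('g, 'b) monoid_scheme \<Rightarrow> 'g \<times> bool \<Rightarrow> 'g" where
  "letter_val G l = (if snd l then fst l else inv\<^bsub>G\<^esub> (fst l))"

definition word_eval :: "('g, 'b) monoid_scheme \<Rightarrow> ('g \<times> bool) list \<Rightarrow> 'g" where
  "word_eval G w = foldr (\<lambda>l acc. letter_val G l \<otimes>\<^bsub>G\<^esub> acc) w \<one>\<^bsub>G\<^esub>"

definition Lmax :: "('g \<Rightarrow> 'x::metric_space \<Rightarrow> 'x) \<Rightarrow> 'g set \<Rightarrow> 'x \<Rightarrow> real" where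
  "Lmax act U p = Max ((\<lambda>u. dist (act u p) p) ` U)"

end

theory Submission
  imports Defs
begin

definition okp :: "'g \<times> bool \<Rightarrow> 'g \<times> bool \<Rightarrow> bool" where
  "okp a b \<longleftrightarrow> \<not> (fst a = fst b \<and> snd a \<noteq> snd b)"

definition flipl :: "'g \<times> bool \<Rightarrow> 'g \<times> bool" where
  "flipl l = (fst l, \<not> snd l)"

definition winv :: "('g \<times> bool) list \<Rightarrow> ('g \<times> bool) list" where
  "winv w = rev (map flipl w)"

lemma reduced_word_alt:
  "reduced_word U w \<longleftrightarrow> fst ` set w \<subseteq> U \<and> successively okp w"
  unfolding reduced_word_def successively_conv_nth okp_def by auto

lemma gromov_nonneg: "gromov x y z \<ge> 0"
  unfolding gromov_def using dist_triangle[of x y z] by (simp add: dist_commute)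

lemma gromov_sum: "gromov a p t + gromov p t a = dist a t"
  unfolding gromov_def by (simp add: dist_commute field_simps)

lemma gromov_self: "gromov p z p = 0"
  unfolding gromov_def by (simp add: dist_commute)

lemma dist_via_gromov: "dist z p = dist t p + dist z t - 2 * gromov p z t"
  unfolding gromov_def by (simp add: dist_commute field_simps)

locale setting =
  fixes G :: "('g, 'b) monoid_scheme"
    and act :: "'g \<Rightarrow> 'x::metric_space \<Rightarrow> 'x"
    and \<delta> \<alpha> :: real and U :: "'g set" and p :: 'x
  assumes ia: "isometric_action G act"
    and hyp: "hyperbolic \<delta> TYPE('x)"
    and al: "\<alpha> \<ge> 3 * \<delta>"
    and ar: "alpha_reduced G act \<delta> \<alpha> U p"
begin

lemma grp: "group G" using ia unfolding isometric_action_def by auto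

lemma act_one: "act \<one>\<^bsub>G\<^esub> x = x" using ia unfolding isometric_action_def by auto

lemma act_mult: "g \<in> carrier G \<Longrightarrow> h \<in> carrier G \<Longrightarrow> act (g \<otimes>\<^bsub>G\<^esub> h) x = act g (act h x)"
  using ia unfolding isometric_action_def by auto

lemma act_iso: "g \<in> carrier G \<Longrightarrow> dist (act g x) (act g y) = dist x y"
  using ia unfolding isometric_action_def by auto

lemma gromov_iso: "g \<in> carrier G \<Longrightarrow> gromov (act g x) (act g y) (act g z) = gromov x y z"
  unfolding gromov_def by (simp add: act_iso)

lemma delta_nonneg: "\<delta> \<ge> 0"
proof -
  have "gromov p p p \<ge> min (gromov p p p) (gromov p p p) - \<delta>"
    using hyp unfolding hyperbolic_def by blast
  thus ?thesis by (simp add: gromov_def)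
qed

lemma alpha_nonneg: "\<alpha> \<ge> 0" using al delta_nonneg by linarith

lemma Ufin: "finite U" and Usub: "U \<subseteq> carrier G" and Udisj: "U \<inter> (\<lambda>u. inv\<^bsub>G\<^esub> u) ` U = {}"
  and Ured: "\<And>u1 u2. u1 \<in> U \<union> (\<lambda>u. inv\<^bsub>G\<^esub> u) ` U \<Longrightarrow> u2 \<in> U \<union> (\<lambda>u. inv\<^bsub>G\<^esub> u) ` U \<Longrightarrow> u1 \<noteq> u2 \<Longrightarrow>
        gromov (act u1 p) (act u2 p) p
          < min (dist (act u1 p) p) (dist (act u2 p) p) / 2 - \<alpha> - 50 * \<delta>"
  using ar unfolding alpha_reduced_def by auto

definition ell where "ell g = dist (act g p) p"

lemma ell_inv: "g \<in> carrier G \<Longrightarrow> ell (inv\<^bsub>G\<^esub> g) = ell g"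
proof -
  assume g: "g \<in> carrier G"
  have "ell (inv\<^bsub>G\<^esub> g) = dist (act g (act (inv\<^bsub>G\<^esub> g) p)) (act g p)"
    unfolding ell_def using g by (simp add: act_iso grp group.inv_closed)
  also have "act g (act (inv\<^bsub>G\<^esub> g) p) = p"
    using g grp by (simp add: act_mult[symmetric] group.inv_closed group.r_inv act_one)
  finally show ?thesis unfolding ell_def by (simp add: dist_commute)
qed

abbreviation "S \<equiv> U \<union> (\<lambda>u. inv\<^bsub>G\<^esub> u) ` U"

lemma S_carrier: "g \<in> S \<Longrightarrow> g \<in> carrier G"
  using Usub grp by (auto simp: group.inv_closed)

lemma S_inv: "g \<in> S \<Longrightarrow> inv\<^bsub>G\<^esub> g \<in> S"
  using Usub grp by (auto simp: group.inv_inv subset_iff)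

lemma S_inv_ne: "g \<in> S \<Longrightarrow> inv\<^bsub>G\<^esub> g \<noteq> g"
proof
  assume g: "g \<in> S" and e: "inv\<^bsub>G\<^esub> g = g"
  show False
  proof (cases "g \<in> U")
    case True then show ?thesis using Udisj e by (metis disjoint_iff image_eqI)
  next
    case False
    then obtain u where u: "u \<in> U" "g = inv\<^bsub>G\<^esub> u" using g by auto
    then have "u = g" using e Usub grp by (metis group.inv_inv subsetD)
    then show ?thesis using u False by simp
  qed
qed

lemma ell_big: "g \<in> S \<Longrightarrow> ell g > 2 * \<alpha> + 100 * \<delta>"
proof -
  assume g: "g \<in> S"
  have "gromov (act g p) (act (inv\<^bsub>G\<^esub> g) p) p
          < min (dist (act g p) p) (dist (act (inv\<^bsub>G\<^esub> g) p) p) / 2 - \<alpha> - 50 * \<delta>"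
    using Ured[OF g S_inv[OF g]] S_inv_ne[OF g] by metis
  moreover have "dist (act (inv\<^bsub>G\<^esub> g) p) p = ell g"
    using ell_inv[OF S_carrier[OF g]] unfolding ell_def by simp
  ultimately show ?thesis using gromov_nonneg[of "act g p" "act (inv\<^bsub>G\<^esub> g) p" p]
    unfolding ell_def by simp
qed

abbreviation "lv \<equiv> letter_val G"

lemma lv_S: "fst l \<in> U \<Longrightarrow> lv l \<in> S"
  unfolding letter_val_def by auto

lemma lv_carrier: "fst l \<in> U \<Longrightarrow> lv l \<in> carrier G"
  using lv_S S_carrier by blast

lemma lv_flip: "fst l \<in> U \<Longrightarrow> lv (flipl l) = inv\<^bsub>G\<^esub> (lv l)"
  unfolding letter_val_def flipl_def using Usub grp by (auto simp: group.inv_inv subset_iff)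

lemma lv_inj: "fst a \<in> U \<Longrightarrow> fst b \<in> U \<Longrightarrow> lv a = lv b \<Longrightarrow> a = b"
proof -
  assume a: "fst a \<in> U" and b: "fst b \<in> U" and e: "lv a = lv b"
  have invinj: "inv\<^bsub>G\<^esub> x = inv\<^bsub>G\<^esub> y \<Longrightarrow> x \<in> U \<Longrightarrow> y \<in> U \<Longrightarrow> x = y" for x y
    using Usub grp by (metis group.inv_inv subsetD)
  show ?thesis
  proof (cases a; cases b)
    fix x s y t assume ab: "a = (x, s)" "b = (y, t)"
    show ?thesis using a b e Udisj invinj unfolding ab letter_val_def
      by (cases s; cases t) (auto simp: disjoint_iff)
  qed
qed

lemma eval_carrier: "fst ` set w \<subseteq> U \<Longrightarrow> word_eval G w \<in> carrier G"
  by (induction w) (auto simp: word_eval_def grp group.is_monoid monoid.m_closed lv_carrier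
       monoid.one_closed)

lemma eval_Cons: "word_eval G (l # w) = lv l \<otimes>\<^bsub>G\<^esub> word_eval G w"
  by (simp add: word_eval_def)

lemma eval_append: "fst ` set v \<subseteq> U \<Longrightarrow> fst ` set w \<subseteq> U \<Longrightarrow>
    word_eval G (v @ w) = word_eval G v \<otimes>\<^bsub>G\<^esub> word_eval G w"
proof (induction v)
  case Nil then show ?case
    using eval_carrier[of w] grp by (simp add: word_eval_def group.is_monoid monoid.l_one)
next
  case (Cons a v)
  then show ?case
    using eval_carrier[of v] eval_carrier[of w] lv_carrier[of a] grp
    by (simp add: eval_Cons group.is_monoid monoid.m_assoc)
qed

lemma eval_single: "fst l \<in> U \<Longrightarrow> word_eval G [l] = lv l"
  using grp lv_carrier by (simp add: word_eval_def group.is_monoid monoid.r_one)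

lemma upper: "fst ` set w \<subseteq> U \<Longrightarrow> dist (act (word_eval G w) p) p \<le> Lmax act U p * real (length w)"
proof (induction w)
  case Nil then show ?case by (simp add: word_eval_def act_one)
next
  case (Cons l w)
  have l: "fst l \<in> U" and w: "fst ` set w \<subseteq> U" using Cons.prems by auto
  have g: "word_eval G w \<in> carrier G" using eval_carrier[OF w] .
  have "dist (act (word_eval G (l # w)) p) p = dist (act (lv l) (act (word_eval G w) p)) p"
    by (simp add: eval_Cons act_mult[OF lv_carrier[OF l] g])
  also have "\<dots> \<le> dist (act (lv l) (act (word_eval G w) p)) (act (lv l) p) + dist (act (lv l) p) p"
    by (rule dist_triangle)
  also have "\<dots> = dist (act (word_eval G w) p) p + ell (lv l)"
    by (simp add: act_iso[OF lv_carrier[OF l]] ell_def)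
  also have "ell (lv l) = ell (fst l)"
    unfolding letter_val_def using ell_inv Usub l by auto
  also have "ell (fst l) \<le> Lmax act U p"
    unfolding Lmax_def ell_def using Ufin l by (intro Max_ge) auto
  finally show ?case using Cons.IH[OF w] by (simp add: algebra_simps)
qed

lemma lower_aux:
  "reduced_word U (v @ [s]) \<Longrightarrow>
     gromov p (act (word_eval G (v @ [s])) p) (act (word_eval G v) p) < ell (lv s) / 2 - \<alpha> - 49 * \<delta>
   \<and> dist (act (word_eval G (v @ [s])) p) p \<ge> 2 * \<alpha> * real (length (v @ [s]))
   \<and> dist (act (word_eval G (v @ [s])) p) p > 0"
proof (induction v arbitrary: s rule: rev_induct)
  case Nil
  have s: "fst s \<in> U" using Nil.prems unfolding reduced_word_def by auto
  have b: "ell (lv s) > 2 * \<alpha> + 100 * \<delta>" using ell_big[OF lv_S[OF s]] .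
  have e: "word_eval G ([] @ [s]) = lv s" "word_eval G [] = \<one>\<^bsub>G\<^esub>"
    using eval_single[OF s] by (simp, simp add: word_eval_def)
  have ne: "act (lv s) p \<noteq> p" using b delta_nonneg alpha_nonneg unfolding ell_def
    by (metis add_nonneg_nonneg dist_self mult_nonneg_nonneg not_less zero_le_numeral)
  show ?case using b delta_nonneg alpha_nonneg ne
    by (simp only: e act_one gromov_self ell_def) simp
next
  case (snoc r v)
  have red: "reduced_word U (v @ [r, s])" using snoc.prems by simp
  have U: "fst ` set v \<subseteq> U" "fst r \<in> U" "fst s \<in> U" using red unfolding reduced_word_def by auto
  have suc: "successively okp (v @ [r, s])" using red reduced_word_alt by blast
  have ok: "okp r s" using suc by (simp add: successively_append_iff)
  have red': "reduced_word U (v @ [r])" using suc U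
    by (auto simp: reduced_word_alt successively_append_iff)
  note IH = snoc.IH[OF red']
  define gv where "gv = word_eval G (v @ [r])"
  define gv' where "gv' = word_eval G v"
  have gvc: "gv \<in> carrier G" unfolding gv_def using U by (intro eval_carrier) auto
  have gv'c: "gv' \<in> carrier G" unfolding gv'_def using U by (intro eval_carrier) auto
  have rc: "lv r \<in> carrier G" and sc: "lv s \<in> carrier G" using U lv_carrier by auto
  have gvdef: "gv = gv' \<otimes>\<^bsub>G\<^esub> lv r"
    unfolding gv_def gv'_def using U by (simp add: eval_append eval_single)
  have gw: "word_eval G ((v @ [r]) @ [s]) = gv \<otimes>\<^bsub>G\<^esub> lv s"
    unfolding gv_def using U eval_append[of "v @ [r]" "[s]"] eval_single[of s] by simp
  have gv': "gv' = gv \<otimes>\<^bsub>G\<^esub> inv\<^bsub>G\<^esub> (lv r)"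
    using gvdef grp gv'c rc by (simp add: group.is_monoid monoid.m_assoc group.inv_closed group.r_inv monoid.r_one)
  define a where "a = act gv' p"
  define t where "t = act gv p"
  define z where "z = act gv (act (lv s) p)"
  have ir: "inv\<^bsub>G\<^esub> (lv r) \<in> carrier G" using rc grp by (simp add: group.inv_closed)
  have a2: "a = act gv (act (inv\<^bsub>G\<^esub> (lv r)) p)"
    unfolding a_def gv' by (simp add: act_mult gvc ir)
  have zeq: "act (word_eval G ((v @ [r]) @ [s])) p = z"
    unfolding gw z_def by (simp add: act_mult gvc sc)
  have ne: "inv\<^bsub>G\<^esub> (lv r) \<noteq> lv s"
  proof
    assume "inv\<^bsub>G\<^esub> (lv r) = lv s"
    then have "lv (flipl r) = lv s" using lv_flip U by simp
    then have "flipl r = s" using lv_inj U by (simp add: flipl_def)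
    then show False using ok by (auto simp: okp_def flipl_def)
  qed
  have inS: "inv\<^bsub>G\<^esub> (lv r) \<in> S" "lv s \<in> S" using S_inv lv_S U by auto
  have ellir: "ell (inv\<^bsub>G\<^esub> (lv r)) = ell (lv r)" using ell_inv rc by simp
  have gaz: "gromov a z t < min (ell (lv r)) (ell (lv s)) / 2 - \<alpha> - 50 * \<delta>"
  proof -
    have "gromov a z t = gromov (act (inv\<^bsub>G\<^esub> (lv r)) p) (act (lv s) p) p"
      unfolding a2 z_def t_def by (rule gromov_iso[OF gvc])
    also have "\<dots> < min (ell (inv\<^bsub>G\<^esub> (lv r))) (ell (lv s)) / 2 - \<alpha> - 50 * \<delta>"
      using Ured[OF inS ne] unfolding ell_def .
    finally show ?thesis using ellir by simp
  qed
  have h: "gromov a z t \<ge> min (gromov a p t) (gromov p z t) - \<delta>"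
    using hyp unfolding hyperbolic_def by blast
  have IHA: "gromov p t a < ell (lv r) / 2 - \<alpha> - 49 * \<delta>"
    using IH unfolding t_def a_def gv_def gv'_def by blast
  have dat: "dist a t = ell (lv r)"
    unfolding a2 t_def ell_def using act_iso[OF gvc] ellir[unfolded ell_def]
    by (simp add: ell_def)
  have gapt: "gromov a p t > ell (lv r) / 2 + \<alpha> + 49 * \<delta>"
    using gromov_sum[of a p t] dat IHA by linarith
  have pzt: "gromov p z t < ell (lv s) / 2 - \<alpha> - 49 * \<delta>"
  proof -
    have m1: "min (ell (lv r)) (ell (lv s)) \<le> ell (lv r)" "min (ell (lv r)) (ell (lv s)) \<le> ell (lv s)" by auto
    have "\<not> gromov a p t \<le> gromov p z t"
      using h gaz gapt alpha_nonneg delta_nonneg m1 by linarith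
    then have "min (gromov a p t) (gromov p z t) = gromov p z t" by simp
    then show ?thesis using h gaz m1 by linarith
  qed
  have dzt: "dist z t = ell (lv s)" unfolding z_def t_def ell_def by (simp add: act_iso[OF gvc])
  have dz: "dist z p > dist t p + 2 * \<alpha>"
    using dist_via_gromov[of z p t] dzt pzt delta_nonneg by linarith
  have IHB: "dist t p \<ge> 2 * \<alpha> * real (length (v @ [r]))"
    using IH unfolding t_def gv_def by blast
  have "gromov p (act (word_eval G ((v @ [r]) @ [s])) p) (act (word_eval G (v @ [r])) p)
        < ell (lv s) / 2 - \<alpha> - 49 * \<delta>"
    using pzt zeq unfolding t_def gv_def by simp
  moreover have "dist (act (word_eval G ((v @ [r]) @ [s])) p) p \<ge> 2 * \<alpha> * real (length ((v @ [r]) @ [s]))"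
    using zeq dz IHB by (simp add: algebra_simps)
  moreover have "dist (act (word_eval G ((v @ [r]) @ [s])) p) p > 0"
    unfolding zeq using dz alpha_nonneg zero_le_dist[of t p] by linarith
  ultimately show ?case by blast
qed

lemma pos: "reduced_word U w \<Longrightarrow> w \<noteq> [] \<Longrightarrow> dist (act (word_eval G w) p) p > 0"
proof -
  assume r: "reduced_word U w" and ne: "w \<noteq> []"
  have e: "butlast w @ [last w] = w" using ne by simp
  show ?thesis using lower_aux[of "butlast w" "last w"] r unfolding e by blast
qed

lemma lower: "reduced_word U w \<Longrightarrow> 2 * \<alpha> * real (length w) \<le> dist (act (word_eval G w) p) p"
proof (cases "w = []")
  case True then show ?thesis by simp
next
  case False
  assume r: "reduced_word U w"
  have e: "butlast w @ [last w] = w" using False by simp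
  show ?thesis using lower_aux[of "butlast w" "last w"] r unfolding e by blast
qed

lemma winv_eval: "fst ` set w \<subseteq> U \<Longrightarrow> word_eval G (winv w) = inv\<^bsub>G\<^esub> (word_eval G w)"
proof (induction w)
  case Nil then show ?case using grp by (simp add: winv_def word_eval_def group.is_monoid monoid.inv_one)
next
  case (Cons l w)
  have l: "fst l \<in> U" and w: "fst ` set w \<subseteq> U" using Cons.prems by auto
  have "word_eval G (winv (l # w)) = word_eval G (winv w @ [flipl l])"
    by (simp add: winv_def)
  also have "\<dots> = word_eval G (winv w) \<otimes>\<^bsub>G\<^esub> lv (flipl l)"
    using w l by (subst eval_append) (auto simp: winv_def flipl_def eval_single)
  also have "\<dots> = inv\<^bsub>G\<^esub> (word_eval G w) \<otimes>\<^bsub>G\<^esub> inv\<^bsub>G\<^esub> (lv l)"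
    using Cons.IH[OF w] lv_flip[OF l] by simp
  also have "\<dots> = inv\<^bsub>G\<^esub> (lv l \<otimes>\<^bsub>G\<^esub> word_eval G w)"
    using grp lv_carrier[OF l] eval_carrier[OF w] by (simp add: group.inv_mult_group)
  finally show ?case by (simp add: eval_Cons)
qed

lemma inj: "reduced_word U w1 \<Longrightarrow> reduced_word U w2 \<Longrightarrow> word_eval G w1 = word_eval G w2 \<Longrightarrow> w1 = w2"
proof (induction w1 arbitrary: w2)
  case Nil
  show ?case
  proof (rule ccontr)
    assume "[] \<noteq> w2"
    then have "dist (act (word_eval G w2) p) p > 0" using pos Nil by auto
    then show False using Nil.prems by (simp add: word_eval_def act_one)
  qed
next
  case (Cons a w1)
  note CP = Cons.prems and CIH = Cons.IH
  show ?case
  proof (cases w2)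
    case Nil
    have "dist (act (word_eval G (a # w1)) p) p > 0" using pos CP by blast
    then show ?thesis using CP Nil by (simp add: word_eval_def act_one)
  next
    case (Cons b w2')
    note Cons2 = this
    have aU: "fst a \<in> U" and w1U: "fst ` set w1 \<subseteq> U" and bU: "fst b \<in> U" and w2U: "fst ` set w2' \<subseteq> U"
      using CP Cons2 unfolding reduced_word_def by auto
    have s1: "successively okp (a # w1)" and s2: "successively okp (b # w2')"
      using CP Cons2 reduced_word_alt by blast+
    show ?thesis
    proof (cases "a = b")
      case True
      have r1: "reduced_word U w1" using s1 w1U by (auto simp: reduced_word_alt successively_Cons)
      have r2: "reduced_word U w2'" using s2 w2U by (auto simp: reduced_word_alt successively_Cons)
      have "lv a \<otimes>\<^bsub>G\<^esub> word_eval G w1 = lv a \<otimes>\<^bsub>G\<^esub> word_eval G w2'"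
        using CP Cons2 True by (simp add: eval_Cons)
      then have "word_eval G w1 = word_eval G w2'"
        using grp lv_carrier[OF aU] eval_carrier[OF w1U] eval_carrier[OF w2U]
        using monoid.Units_l_cancel[OF group.is_monoid[OF grp]] group.Units_eq[OF grp] by simp
      then show ?thesis using CIH[OF r1 r2] Cons2 True by simp
    next
      case False
      define v where "v = winv (b # w2') @ (a # w1)"
      have vU: "fst ` set v \<subseteq> U" using aU w1U bU w2U by (auto simp: v_def winv_def flipl_def)
      have okf: "okp (flipl x) (flipl y) = okp y x" for x y :: "'g \<times> bool"
        by (auto simp: okp_def flipl_def)
      have sw: "successively okp (winv (b # w2'))"
        using s2 unfolding winv_def successively_rev successively_map okf by simp
      have lw: "last (winv (b # w2')) = flipl b" by (simp add: winv_def)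
      have jn: "okp (flipl b) a" using False
        by (cases a; cases b) (auto simp: okp_def flipl_def)
      have "successively okp v"
        unfolding v_def successively_append_iff using sw s1 lw jn by simp
      then have rv: "reduced_word U v" using vU reduced_word_alt by blast
      have "word_eval G v = inv\<^bsub>G\<^esub> (word_eval G (b # w2')) \<otimes>\<^bsub>G\<^esub> word_eval G (a # w1)"
      proof -
        have wU: "fst ` set (winv (b#w2')) \<subseteq> U" using bU w2U by (auto simp: winv_def flipl_def)
        have a1: "fst ` set (a # w1) \<subseteq> U" "fst ` set (b # w2') \<subseteq> U" using aU w1U bU w2U by auto
        show ?thesis unfolding v_def eval_append[OF wU a1(1)] winv_eval[OF a1(2)] ..
      qed
      also have "\<dots> = \<one>\<^bsub>G\<^esub>" using CP Cons2 grp eval_carrier[of "a # w1"] aU w1U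
        by (simp add: group.l_inv)
      finally have "dist (act (word_eval G v) p) p = 0" by (simp add: act_one)
      moreover have "dist (act (word_eval G v) p) p > 0" using pos[OF rv] by (simp add: v_def)
      ultimately show ?thesis by simp
    qed
  qed
qed

end

theorem mainTheorem10:
  fixes G :: "('g, 'b) monoid_scheme"
    and act :: "'g \<Rightarrow> 'x::metric_space \<Rightarrow> 'x"
    and \<delta> \<alpha> :: real and U :: "'g set" and p :: 'x
  assumes "isometric_action G act"
    and "hyperbolic \<delta> TYPE('x)"
    and "geodesic_space TYPE('x)"
    and "\<alpha> \<ge> 3 * \<delta>"
    and "alpha_reduced G act \<delta> \<alpha> U p"
  shows "(\<forall>w. reduced_word U w \<longrightarrow>
            2 * \<alpha> * real (length w) \<le> dist (act (word_eval G w) p) p \<and>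
            dist (act (word_eval G w) p) p \<le> Lmax act U p * real (length w))
       \<and> (\<forall>w1 w2. reduced_word U w1 \<and> reduced_word U w2 \<and>
                   word_eval G w1 = word_eval G w2 \<longrightarrow> w1 = w2)"
proof -
  interpret setting G act \<delta> \<alpha> U p using assms by unfold_locales
  have "fst ` set w \<subseteq> U" if "reduced_word U w" for w using that unfolding reduced_word_def by blast
  then show ?thesis using lower upper inj by blast
qed

end
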